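(* Let $\mathbf K$ be a commutative field, $p,q\in\mathbb N$, and let $A_1,\dots,A_d\in\mathrm{Rec}_{p\times q}(\mathbf K)$ span a recursively closed subspace $\mathcal A=\sum_{j=1}^d\mathbf K A_j$, with saturation level $N$ (which satisfies $N\le\dim(\mathcal A)-1<d$). Then $A_1,\dots,A_d$ are linearly independent if and only if their restrictions $A_1[\mathcal M_{p\times q}^{\le N}],\dots,A_d[\mathcal M_{p\times q}^{\le N}]\in\mathbf K^{\mathcal M_{p\times q}^{\le N}}$ are linearly independent.
   Context: For $p,q,l\in\mathbb N$, $\mathcal M_{p\times q}^l$ is the set of pairs $(U,W)$ of words of common length $l$ with $U\in\{0,\dots,p-1\}^l$, $W\in\{0,\dots,q-1\}^l$; $\mathcal M_{p\times q}=\bigcup_l\mathcal M_{p\times q}^l$ and $\mathcal M_{p\times q}^{\le l}$ is the set of words of length at most $l$. $\mathbf K^{\mathcal M_{p\times q}}$ is the space of functions $\mathcal M_{p\times q}\to\mathbf K$, values written $A[U,W]$; $A[\mathcal S]$ is the restriction of $A$ to a subset $\mathcal S$. Shift maps: $(\rho(S,T)A)[U,W]=A[US,WT]$; a subspace is recursively closed if invariant under all shift maps; $\mathrm{Rec}_{p\times q}(\mathbf K)$ is the set of $A$ whose span of $\{\rho(S,T)A\}$ is finite-dimensional. For a subspace $\mathcal A$, $\mathcal A[\mathcal M_{p\times q}^{\le l}]$ is its image under restriction to $\mathcal M_{p\times q}^{\le l}$; the saturation level of a non-zero $\mathcal A$ is the smallest $N\ge0$ such that the projection $\mathcal A[\mathcal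 M_{p\times q}^{\le N+1}]\to\mathcal A[\mathcal M_{p\times q}^{\le N}]$ is an isomorphism ($\infty$ if none), and the zero space has saturation level $-1$. *)

theory Defs
  imports Main
begin

text \<open>A series is any function on pairs of lists; only its values on
  the word set matter (all notions below only look at values on words).\<close>

definition words :: "nat \<Rightarrow> nat \<Rightarrow> (nat list \<times> nat list) set" where
  "words p q = {(U, W). length U = length W \<and> set U \<subseteq> {..<p} \<and> set W \<subseteq> {..<q}}"

text \<open>Words of length at most l (l an integer; for l = -1 this is empty).\<close>
definition words_le :: "nat \<Rightarrow> nat \<Rightarrow> int \<Rightarrow> (nat list \<times> nat list) set" where
  "words_le p q l = {(U, W) \<in> words p q. int (length U) \<le> l}"

definition shift :: "nat list \<Rightarrow> nat list \<Rightarrow> (nat list \<times> nat list \<Rightarrow> 'k) \<Rightarrow> (nat list \<times> nat list \<Rightarrow> 'k)" where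
  "shift S T A = (\<lambda>(U, W). A (U @ S, W @ T))"

definition restr :: "(nat list \<times> nat list) set \<Rightarrow> (nat list \<times> nat list \<Rightarrow> 'k::zero) \<Rightarrow> (nat list \<times> nat list \<Rightarrow> 'k)" where
  "restr S f = (\<lambda>x. if x \<in> S then f x else 0)"

definition lin_indep_on :: "(nat list \<times> nat list) set \<Rightarrow> nat \<Rightarrow> (nat \<Rightarrow> nat list \<times> nat list \<Rightarrow> 'k::field) \<Rightarrow> bool" where
  "lin_indep_on S d B \<longleftrightarrow>
     (\<forall>c. (\<forall>x\<in>S. (\<Sum>j<d. c j * B j x) = 0) \<longrightarrow> (\<forall>j<d. c j = 0))"

definition span_fam :: "nat \<Rightarrow> nat \<Rightarrow> nat \<Rightarrow> (nat \<Rightarrow> nat list \<times> nat list \<Rightarrow> 'k::field) \<Rightarrow> (nat list \<times> nat list \<Rightarrow> 'k) set" where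
  "span_fam p q d A = {restr (words p q) (\<lambda>x. \<Sum>j<d. c j * A j x) | c. True}"

text \<open>Rec: the span of all shifts of A is finite dimensional, i.e. contained in the span of
  finitely many series.\<close>
definition Rec :: "nat \<Rightarrow> nat \<Rightarrow> (nat list \<times> nat list \<Rightarrow> 'k::field) \<Rightarrow> bool" where
  "Rec p q A \<longleftrightarrow> (\<exists>n B. \<forall>(S, T) \<in> words p q. restr (words p q) (shift S T A) \<in> span_fam p q n B)"

definition rec_closed :: "nat \<Rightarrow> nat \<Rightarrow> nat \<Rightarrow> (nat \<Rightarrow> nat list \<times> nat list \<Rightarrow> 'k::field) \<Rightarrow> bool" where
  "rec_closed p q d A \<longleftrightarrow>
     (\<forall>(S, T) \<in> words p q. \<forall>f \<in> span_fam p q d A. restr (words p q) (shift S T f) \<in> span_fam p q d A)"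

definition proj_iso :: "nat \<Rightarrow> nat \<Rightarrow> nat \<Rightarrow> (nat \<Rightarrow> nat list \<times> nat list \<Rightarrow> 'k::field) \<Rightarrow> nat \<Rightarrow> bool" where
  "proj_iso p q d A l \<longleftrightarrow>
     bij_betw (restr (words_le p q (int l)))
       (restr (words_le p q (int l + 1)) ` span_fam p q d A)
       (restr (words_le p q (int l)) ` span_fam p q d A)"

text \<open>Saturation level (an integer; -1 for the zero space).  No finite value is assigned
  when no level saturates (the infinite case).\<close>
definition is_saturation_level :: "nat \<Rightarrow> nat \<Rightarrow> nat \<Rightarrow> (nat \<Rightarrow> nat list \<times> nat list \<Rightarrow> 'k::field) \<Rightarrow> int \<Rightarrow> bool" where
  "is_saturation_level p q d A N \<longleftrightarrow>
     (if span_fam p q d A \<subseteq> {\<lambda>x. 0} then N = -1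
      else N \<ge> 0 \<and> proj_iso p q d A (nat N) \<and> (\<forall>n < nat N. \<not> proj_iso p q d A n))"

end

theory Submission
  imports Defs
begin

lemma zero_in_span: "(\<lambda>x. 0) \<in> span_fam p q d A"
proof -
  have "restr (words p q) (\<lambda>x. \<Sum>j<d. (\<lambda>_. 0) j * A j x) = (\<lambda>x. 0)"
    by (simp add: restr_def)
  show ?thesis unfolding span_fam_def
    by (rule CollectI, rule exI[where x="\<lambda>_. 0"]) (simp add: restr_def)
qed

lemma words_le_sub: "words_le p q l \<subseteq> words p q"
  unfolding words_le_def by auto

lemma step:
  assumes iso: "proj_iso p q d A n" and h: "h \<in> span_fam p q d A"
    and z: "\<forall>x\<in>words_le p q (int n). h x = 0"
  shows "\<forall>x\<in>words_le p q (int n + 1). h x = 0"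
proof -
  have inj: "inj_on (restr (words_le p q (int n))) (restr (words_le p q (int n + 1)) ` span_fam p q d A)"
    using iso unfolding proj_iso_def bij_betw_def by blast
  have sub: "words_le p q (int n) \<subseteq> words_le p q (int n + 1)"
    unfolding words_le_def by auto
  have e1: "restr (words_le p q (int n)) (restr (words_le p q (int n + 1)) h) = (\<lambda>x. 0)"
    using z sub by (auto simp: restr_def)
  have e2: "restr (words_le p q (int n)) (restr (words_le p q (int n + 1)) (\<lambda>x. 0)) = (\<lambda>x. 0)"
    by (auto simp: restr_def)
  have "restr (words_le p q (int n + 1)) h = restr (words_le p q (int n + 1)) (\<lambda>x. 0)"
  proof (rule inj_onD[OF inj])
    show "restr (words_le p q (int n)) (restr (words_le p q (int n + 1)) h) =
      restr (words_le p q (int n)) (restr (words_le p q (int n + 1)) (\<lambda>x. 0))"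
      by (simp only: e1 e2)
    show "restr (words_le p q (int n + 1)) h \<in> restr (words_le p q (int n + 1)) ` span_fam p q d A"
      using h by blast
    show "restr (words_le p q (int n + 1)) (\<lambda>x. 0) \<in> restr (words_le p q (int n + 1)) ` span_fam p q d A"
      using zero_in_span by blast
  qed
  show ?thesis
  proof
    fix x assume x: "x \<in> words_le p q (int n + 1)"
    have "restr (words_le p q (int n + 1)) h x = restr (words_le p q (int n + 1)) (\<lambda>x. 0) x"
      using \<open>restr (words_le p q (int n + 1)) h = _\<close> by simp
    then show "h x = 0" using x by (simp add: restr_def)
  qed
qed

lemma key:
  assumes rc: "rec_closed p q d A" and iso: "proj_iso p q d A n"
  shows "\<forall>h\<in>span_fam p q d A. (\<forall>x\<in>words_le p q (int n). h x = 0) \<longrightarrow>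
     (\<forall>U W. (U, W) \<in> words p q \<longrightarrow> length U = m \<longrightarrow> h (U, W) = 0)"
proof (induction m)
  case 0
  show ?case
  proof (intro ballI impI allI)
    fix h U W assume h: "h \<in> span_fam p q d A" and z: "\<forall>x\<in>words_le p q (int n). h x = 0"
      and w: "(U, W) \<in> words p q" and l: "length U = 0"
    have "(U, W) \<in> words_le p q (int n)" using w l unfolding words_le_def by auto
    then show "h (U, W) = 0" using z by blast
  qed
next
  case (Suc m)
  show ?case
  proof (intro ballI impI allI)
    fix h U W assume h: "h \<in> span_fam p q d A" and z: "\<forall>x\<in>words_le p q (int n). h x = 0"
      and w: "(U, W) \<in> words p q" and l: "length U = Suc m"
    have z1: "\<forall>x\<in>words_le p q (int n + 1). h x = 0" using step[OF iso h z] .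
    show "h (U, W) = 0"
    proof (cases "Suc m \<le> n + 1")
      case True
      then have "(U, W) \<in> words_le p q (int n + 1)" using w l unfolding words_le_def by auto
      then show ?thesis using z1 by blast
    next
      case False
      have lw: "length W = Suc m" using w l unfolding words_def by auto
      obtain U' s where U: "U = U' @ [s]" using l by (metis length_Suc_conv_rev)
      obtain W' t where Wd: "W = W' @ [t]" using lw by (metis length_Suc_conv_rev)
      have st: "([s], [t]) \<in> words p q" and w': "(U', W') \<in> words p q"
        using w U Wd unfolding words_def by auto
      define g where "g = restr (words p q) (shift [s] [t] h)"
      have g: "g \<in> span_fam p q d A" using rc st h unfolding rec_closed_def g_def by blast
      have gz: "\<forall>x\<in>words_le p q (int n). g x = 0"
      proof
        fix x assume x: "x \<in> words_le p q (int n)"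
        obtain a b where ab: "x = (a, b)" by force
        have "(a @ [s], b @ [t]) \<in> words_le p q (int n + 1)"
          using x st unfolding ab words_le_def words_def by auto
        then show "g x = 0" using z1 unfolding g_def restr_def shift_def ab by auto
      qed
      have lU': "length U' = m" using l U by simp
      have "g (U', W') = 0" using Suc.IH g gz w' lU' by blast
      then show ?thesis using w' unfolding g_def restr_def shift_def U Wd by simp
    qed
  qed
qed

theorem mainTheorem5:
  fixes p q d :: nat and A :: "nat \<Rightarrow> nat list \<times> nat list \<Rightarrow> 'k::field" and N :: int
  assumes "\<forall>j<d. Rec p q (A j)"
    and "rec_closed p q d A"
    and "is_saturation_level p q d A N"
  shows "lin_indep_on (words p q) d A \<longleftrightarrow> lin_indep_on (words_le p q N) d A"
proof
  assume R: "lin_indep_on (words_le p q N) d A"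
  show "lin_indep_on (words p q) d A"
    unfolding lin_indep_on_def
  proof (rule allI, rule impI)
    fix c assume "\<forall>x\<in>words p q. (\<Sum>j<d. c j * A j x) = 0"
    then have "\<forall>x\<in>words_le p q N. (\<Sum>j<d. c j * A j x) = 0" using words_le_sub[of p q N] by blast
    then show "\<forall>j<d. c j = 0" using R unfolding lin_indep_on_def by blast
  qed
next
  assume L: "lin_indep_on (words p q) d A"
  show "lin_indep_on (words_le p q N) d A"
    unfolding lin_indep_on_def
  proof (rule allI, rule impI)
    fix c assume c: "\<forall>x\<in>words_le p q N. (\<Sum>j<d. c j * A j x) = 0"
    define h where "h = restr (words p q) (\<lambda>x. \<Sum>j<d. c j * A j x)"
    have h: "h \<in> span_fam p q d A" unfolding h_def span_fam_def by blast
    have "\<forall>x\<in>words p q. h x = 0"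
    proof (cases "span_fam p q d A \<subseteq> {\<lambda>x. 0}")
      case True
      then show ?thesis using h by auto
    next
      case False
      then have N: "N \<ge> 0" and iso: "proj_iso p q d A (nat N)"
        using assms(3) unfolding is_saturation_level_def by auto
      have hz: "\<forall>x\<in>words_le p q (int (nat N)). h x = 0"
        using c N words_le_sub unfolding h_def restr_def by auto
      show ?thesis
      proof
        fix x assume x: "x \<in> words p q"
        obtain U W where x': "x = (U, W)" by force
        show "h x = 0" using key[OF assms(2) iso, of "length U"] h hz x unfolding x' by blast
      qed
    qed
    then have "\<forall>x\<in>words p q. (\<Sum>j<d. c j * A j x) = 0" unfolding h_def restr_def by auto
    then show "\<forall>j<d. c j = 0" using L unfolding lin_indep_on_def by blast
  qed
qed

end
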